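(* Let $a\neq0$ and $b$ be constants, $I$ an open interval on which $1-az-b>0$, and $\lambda(z)=\sqrt{1-az-b}$ on $I$. Then for either sign $\pm$ and every $c\in I$, the anti-invariant immersion $f_c:\mathbb{R}^2\to\tilde M(1-\lambda^2,2(1\pm\lambda))$, $f_c(x,y)=(x,y,c)$, is not proper biharmonic; equivalently, $\lambda\lambda''-2(\lambda')^2-8\lambda^2(1\pm\lambda)^2\neq0$ at every $z=c\in I$.
   Context: Definition of $\tilde M(1-\lambda^2,2(1\pm\lambda))$: Let $\lambda:I\to\mathbb{R}$ be a non-constant positive smooth function on an open interval $I$, $\lambda'=d\lambda/dz$. On $\tilde M^3=\mathbb{R}^2\times I\subset\mathbb{R}^3$ with coordinates $(x,y,z)$ consider the vector fields $e_1=\partial_x$, $e_2=\partial_y$, $e_3=(\pm 2y+f(z))\partial_x+\big(2\lambda x-\frac{\lambda'}{2\lambda}y+h(z)\big)\partial_y+\partial_z$, where $f,h$ are arbitrary smooth functions of $z$. Let $g$ be the Riemannian metric with $g(e_i,e_j)=\delta_{ij}$, $\xi=e_1$, $\eta$ the $1$-form dual to $e_1$, and $\phi$ the $(1,1)$-tensor with $\phi e_1=0$, $\phi e_2=\pm e_3$, $\phi e_3=\mp e_2$ (all double signs correspond to the sign in $\pm 2y$). This is a contact metric manifold which is a generalized $(\kappa,\mu)$-manifold with $\kappa=1-\lambda^2$, $\mu=2(1\pm\lambda)$. $\mathbb{R}^2$ carries the metric induced by $f_c$. An isometric immersion is biharmonic if $\tau_2(f)=-\Delta_f\tau(f)+\mathrm{trace}\,\tilde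 R(\tau(f),df)df=0$ ($\tau(f)=2H$, $H$ the mean curvature vector), and proper biharmonic if biharmonic and not minimal. *)

theory Defs
  imports "HOL-Analysis.Analysis"
begin

text \<open>Points of R^3 with coordinates (x,y,z); vectors are given by their components
  indexed by 0,1,2 (only indices below 3 are meaningful).\<close>

type_synonym pt = "real \<times> real \<times> real"

definition coord :: "nat \<Rightarrow> pt \<Rightarrow> real" where
  "coord k p = (case p of (x, y, z) \<Rightarrow> if k = 0 then x else if k = 1 then y else z)"

definition smooth_on :: "real set \<Rightarrow> (real \<Rightarrow> real) \<Rightarrow> bool" where
  "smooth_on I g \<longleftrightarrow> (\<forall>n. ((deriv ^^ n) g) differentiable_on I)"

definition pd3 :: "nat \<Rightarrow> (pt \<Rightarrow> real) \<Rightarrow> pt \<Rightarrow> real" where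
  "pd3 k u p = (case p of (x, y, z) \<Rightarrow>
     if k = 0 then deriv (\<lambda>t. u (t, y, z)) x
     else if k = 1 then deriv (\<lambda>t. u (x, t, z)) y
     else deriv (\<lambda>t. u (x, y, t)) z)"

definition pd2 :: "nat \<Rightarrow> (real \<times> real \<Rightarrow> real) \<Rightarrow> real \<times> real \<Rightarrow> real" where
  "pd2 k u q = (case q of (x, y) \<Rightarrow>
     if k = 0 then deriv (\<lambda>t. u (t, y)) x else deriv (\<lambda>t. u (x, t)) y)"

definition vderiv :: "(pt \<Rightarrow> nat \<Rightarrow> real) \<Rightarrow> (pt \<Rightarrow> real) \<Rightarrow> pt \<Rightarrow> real" where
  "vderiv X u p = (\<Sum>k<3. X p k * pd3 k u p)"

definition lie :: "(pt \<Rightarrow> nat \<Rightarrow> real) \<Rightarrow> (pt \<Rightarrow> nat \<Rightarrow> real) \<Rightarrow> pt \<Rightarrow> nat \<Rightarrow> real" where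
  "lie X Y p k = vderiv X (\<lambda>q. Y q k) p - vderiv Y (\<lambda>q. X q k) p"

text \<open>A frame E (E i p k = k-th coordinate component of e_(i+1) at p) which is declared
  orthonormal, i.e. defines the Riemannian metric g(e_i,e_j) = delta_ij.
  fcoef gives the components of a vector with respect to the frame.\<close>
definition fcoef :: "(nat \<Rightarrow> pt \<Rightarrow> nat \<Rightarrow> real) \<Rightarrow> pt \<Rightarrow> (nat \<Rightarrow> real) \<Rightarrow> nat \<Rightarrow> real" where
  "fcoef E p v = (THE a. (\<forall>k<3. v k = (\<Sum>i<3. a i * E i p k)) \<and> (\<forall>i. 3 \<le> i \<longrightarrow> a i = 0))"

definition cstr :: "(nat \<Rightarrow> pt \<Rightarrow> nat \<Rightarrow> real) \<Rightarrow> nat \<Rightarrow> nat \<Rightarrow> nat \<Rightarrow> pt \<Rightarrow> real" where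
  "cstr E i j k p = fcoef E p (lie (E i) (E j) p) k"

text \<open>Levi-Civita connection of g (Koszul formula for an orthonormal frame):
  nabla_{e_i} e_j = sum_k Gam i j k e_k.\<close>
definition Gam :: "(nat \<Rightarrow> pt \<Rightarrow> nat \<Rightarrow> real) \<Rightarrow> nat \<Rightarrow> nat \<Rightarrow> nat \<Rightarrow> pt \<Rightarrow> real" where
  "Gam E i j k p = (cstr E i j k p - cstr E j k i p + cstr E k i j p) / 2"

text \<open>Riemann curvature R(X,Y) = [nabla_X, nabla_Y] - nabla_[X,Y]:
  R(e_i,e_j)e_l = sum_n Rm i j l n e_n.\<close>
definition Rm :: "(nat \<Rightarrow> pt \<Rightarrow> nat \<Rightarrow> real) \<Rightarrow> nat \<Rightarrow> nat \<Rightarrow> nat \<Rightarrow> nat \<Rightarrow> pt \<Rightarrow> real" where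
  "Rm E i j l n p =
     vderiv (E i) (\<lambda>q. Gam E j l n q) p - vderiv (E j) (\<lambda>q. Gam E i l n q) p
     + (\<Sum>m<3. Gam E j l m p * Gam E i m n p - Gam E i l m p * Gam E j m n p
               - cstr E i j m p * Gam E m l n p)"

definition curv :: "(nat \<Rightarrow> pt \<Rightarrow> nat \<Rightarrow> real) \<Rightarrow> pt \<Rightarrow> (nat \<Rightarrow> real) \<Rightarrow> (nat \<Rightarrow> real)
                    \<Rightarrow> (nat \<Rightarrow> real) \<Rightarrow> nat \<Rightarrow> real" where
  "curv E p X Y Z n = (\<Sum>i<3. \<Sum>j<3. \<Sum>l<3. X i * Y j * Z l * Rm E i j l n p)"

text \<open>Maps F from R^2 into R^3; sections along F are given by frame components
  (V u = sum_j V u j e_j(F u)). dFc a u = frame components of dF(d/du_a).\<close>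
definition dFc :: "(nat \<Rightarrow> pt \<Rightarrow> nat \<Rightarrow> real) \<Rightarrow> (real \<times> real \<Rightarrow> pt) \<Rightarrow> nat \<Rightarrow> real \<times> real \<Rightarrow> nat \<Rightarrow> real" where
  "dFc E F a u = fcoef E (F u) (\<lambda>k. pd2 a (\<lambda>q. coord k (F q)) u)"

definition cov :: "(nat \<Rightarrow> pt \<Rightarrow> nat \<Rightarrow> real) \<Rightarrow> (real \<times> real \<Rightarrow> pt) \<Rightarrow> nat
                   \<Rightarrow> (real \<times> real \<Rightarrow> nat \<Rightarrow> real) \<Rightarrow> real \<times> real \<Rightarrow> nat \<Rightarrow> real" where
  "cov E F a V u n = pd2 a (\<lambda>q. V q n) u
      + (\<Sum>i<3. \<Sum>j<3. dFc E F a u i * V u j * Gam E i j n (F u))"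

definition hm :: "(nat \<Rightarrow> pt \<Rightarrow> nat \<Rightarrow> real) \<Rightarrow> (real \<times> real \<Rightarrow> pt) \<Rightarrow> nat \<Rightarrow> nat \<Rightarrow> real \<times> real \<Rightarrow> real" where
  "hm E F a b u = (\<Sum>k<3. dFc E F a u k * dFc E F b u k)"

definition hinv :: "(nat \<Rightarrow> pt \<Rightarrow> nat \<Rightarrow> real) \<Rightarrow> (real \<times> real \<Rightarrow> pt) \<Rightarrow> nat \<Rightarrow> nat \<Rightarrow> real \<times> real \<Rightarrow> real" where
  "hinv E F a b u =
     (let d = hm E F 0 0 u * hm E F 1 1 u - hm E F 0 1 u * hm E F 1 0 u in
      if a = 0 \<and> b = 0 then hm E F 1 1 u / d
      else if a = 1 \<and> b = 1 then hm E F 0 0 u / d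
      else - hm E F a b u / d)"

definition Gh :: "(nat \<Rightarrow> pt \<Rightarrow> nat \<Rightarrow> real) \<Rightarrow> (real \<times> real \<Rightarrow> pt) \<Rightarrow> nat \<Rightarrow> nat \<Rightarrow> nat \<Rightarrow> real \<times> real \<Rightarrow> real" where
  "Gh E F c a b u = (\<Sum>d<2. hinv E F c d u *
      (pd2 a (hm E F d b) u + pd2 b (hm E F d a) u - pd2 d (hm E F a b) u)) / 2"

definition tension :: "(nat \<Rightarrow> pt \<Rightarrow> nat \<Rightarrow> real) \<Rightarrow> (real \<times> real \<Rightarrow> pt) \<Rightarrow> real \<times> real \<Rightarrow> nat \<Rightarrow> real" where
  "tension E F u n = (\<Sum>a<2. \<Sum>b<2. hinv E F a b u *
      (cov E F a (dFc E F b) u n - (\<Sum>c<2. Gh E F c a b u * dFc E F c u n)))"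

definition rlap :: "(nat \<Rightarrow> pt \<Rightarrow> nat \<Rightarrow> real) \<Rightarrow> (real \<times> real \<Rightarrow> pt)
                    \<Rightarrow> (real \<times> real \<Rightarrow> nat \<Rightarrow> real) \<Rightarrow> real \<times> real \<Rightarrow> nat \<Rightarrow> real" where
  "rlap E F V u n = - (\<Sum>a<2. \<Sum>b<2. hinv E F a b u *
      (cov E F a (cov E F b V) u n - (\<Sum>c<2. Gh E F c a b u * cov E F c V u n)))"

definition bitension :: "(nat \<Rightarrow> pt \<Rightarrow> nat \<Rightarrow> real) \<Rightarrow> (real \<times> real \<Rightarrow> pt) \<Rightarrow> real \<times> real \<Rightarrow> nat \<Rightarrow> real" where
  "bitension E F u n = - rlap E F (tension E F) u n
      + (\<Sum>a<2. \<Sum>b<2. hinv E F a b u *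
           curv E (F u) (tension E F u) (dFc E F a u) (dFc E F b u) n)"

definition biharmonic :: "(nat \<Rightarrow> pt \<Rightarrow> nat \<Rightarrow> real) \<Rightarrow> (real \<times> real \<Rightarrow> pt) \<Rightarrow> bool" where
  "biharmonic E F \<longleftrightarrow> (\<forall>u. \<forall>n<3. bitension E F u n = 0)"

definition minimal :: "(nat \<Rightarrow> pt \<Rightarrow> nat \<Rightarrow> real) \<Rightarrow> (real \<times> real \<Rightarrow> pt) \<Rightarrow> bool" where
  "minimal E F \<longleftrightarrow> (\<forall>u. \<forall>n<3. tension E F u n = 0)"

definition proper_biharmonic :: "(nat \<Rightarrow> pt \<Rightarrow> nat \<Rightarrow> real) \<Rightarrow> (real \<times> real \<Rightarrow> pt) \<Rightarrow> bool" where
  "proper_biharmonic E F \<longleftrightarrow> biharmonic E F \<and> \<not> minimal E F"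

text \<open>The orthonormal frame e_1,e_2,e_3 of M(1-lambda^2, 2(1 +- lambda)); s = +1 or -1
  encodes the double sign.\<close>
definition frameM :: "real \<Rightarrow> (real \<Rightarrow> real) \<Rightarrow> (real \<Rightarrow> real) \<Rightarrow> (real \<Rightarrow> real)
                      \<Rightarrow> nat \<Rightarrow> pt \<Rightarrow> nat \<Rightarrow> real" where
  "frameM s lam f h i p k = (case p of (x, y, z) \<Rightarrow>
     if i = 0 then (if k = 0 then 1 else 0)
     else if i = 1 then (if k = 1 then 1 else 0)
     else if i = 2 then
       (if k = 0 then 2 * s * y + f z
        else if k = 1 then 2 * lam z * x - deriv lam z / (2 * lam z) * y + h z
        else if k = 2 then 1 else 0)
     else 0)"

definition fc :: "real \<Rightarrow> real \<times> real \<Rightarrow> pt" where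
  "fc c u = (case u of (x, y) \<Rightarrow> (x, y, c))"

end

theory Submission
  imports Defs
begin

lemma sum3: "(\<Sum>i<(3::nat). F i) = F 0 + F 1 + (F 2 :: real)"
  by (simp add: eval_nat_numeral)
lemma sum2: "(\<Sum>i<(2::nat). F i) = F 0 + (F 1 :: real)"
  by (simp add: eval_nat_numeral)

definition muf :: "(real \<Rightarrow> real) \<Rightarrow> real \<Rightarrow> real" where
  "muf lam z = deriv lam z / (2 * lam z)"

definition FC where
  "FC s lam f h p v = (\<lambda>k. case p of (x,y,z) \<Rightarrow>
     if k = 0 then v 0 - v 2 * (2 * s * y + f z)
     else if k = 1 then v 1 - v 2 * (2 * lam z * x - deriv lam z / (2 * lam z) * y + h z)
     else if k = 2 then v 2 else (0::real))"

lemma fcoef_eq: "fcoef (frameM s lam f h) p v = FC s lam f h p v"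
proof -
  obtain x y z where p: "p = (x,y,z)" by (cases p) auto
  let ?P = "\<lambda>a. (\<forall>k<3. v k = (\<Sum>i<3. a i * frameM s lam f h i p k)) \<and> (\<forall>i. 3 \<le> i \<longrightarrow> a i = 0)"
  have 1: "?P (FC s lam f h p v)"
  proof (intro conjI allI impI)
    fix k :: nat assume "k < 3"
    then have "k = 0 \<or> k = 1 \<or> k = 2" by auto
    then show "v k = (\<Sum>i<3. FC s lam f h p v i * frameM s lam f h i p k)"
      by (auto simp: sum3 p FC_def frameM_def)
  next
    fix i :: nat assume "3 \<le> i" then show "FC s lam f h p v i = 0" by (simp add: FC_def p)
  qed
  have 2: "a = FC s lam f h p v" if "?P a" for a
  proof
    fix k :: nat
    have e0: "v 0 = a 0 + a 2 * (2 * s * y + f z)"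
      using that[THEN conjunct1, rule_format, of 0] by (simp add: sum3 p frameM_def)
    have e1: "v 1 = a 1 + a 2 * (2 * lam z * x - deriv lam z / (2 * lam z) * y + h z)"
      using that[THEN conjunct1, rule_format, of 1] by (simp add: sum3 p frameM_def)
    have e2: "v 2 = a 2"
      using that[THEN conjunct1, rule_format, of 2] by (simp add: sum3 p frameM_def)
    show "a k = FC s lam f h p v k"
      using e0 e1 e2 that[THEN conjunct2] by (auto simp: FC_def p)
  qed
  show ?thesis unfolding fcoef_def using 1 2 by (rule the_equality)
qed

lemma pd3_const: "pd3 k (\<lambda>q. c) p = 0"
  by (cases p) (simp add: pd3_def)

lemma pd3_z: "pd3 k (\<lambda>q. g (snd (snd q))) p = (if k = 0 \<or> k = 1 then 0 else deriv g (snd (snd p)))"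
  by (cases p) (auto simp: pd3_def)

lemma deriv_lin: "deriv (\<lambda>t::real. A * t + B) x = A"
  by (rule DERIV_imp_deriv) (auto intro!: derivative_eq_intros)

lemma frame_n2: "j \<noteq> 2 \<Longrightarrow> frameM s lam f h j q m = (if j = 0 \<and> m = 0 then 1 else if j = 1 \<and> m = 1 then 1 else 0)"
  by (cases q) (auto simp: frameM_def)

lemma pd3_frame_n2: "j \<noteq> 2 \<Longrightarrow> pd3 k (\<lambda>q. frameM s lam f h j q m) p = 0"
  by (simp add: frame_n2 pd3_const)

lemma frame_pt: "frameM s lam f h i (x, y, z) k = (if i = 0 then (if k = 0 then 1 else 0)
     else if i = 1 then (if k = 1 then 1 else 0)
     else if i = 2 then
       (if k = 0 then 2 * s * y + f z
        else if k = 1 then 2 * lam z * x - deriv lam z / (2 * lam z) * y + h z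
        else if k = 2 then 1 else 0)
     else 0)"
  by (simp add: frameM_def)

lemma pd3_frame:
  assumes "k = 0 \<or> k = 1"
  shows "pd3 k (\<lambda>q. frameM s lam f h j q m) p =
    (if j = 2 \<and> m = 0 \<and> k = 1 then 2 * s
     else if j = 2 \<and> m = 1 \<and> k = 0 then 2 * lam (snd (snd p))
     else if j = 2 \<and> m = 1 \<and> k = 1 then - (deriv lam (snd (snd p)) / (2 * lam (snd (snd p))))
     else 0)"
proof (cases "j = 2")
  case False then show ?thesis by (simp add: pd3_frame_n2)
next
  case True
  obtain x y z where p: "p = (x,y,z)" by (cases p) auto
  have d1: "deriv (\<lambda>t. 2 * s * t + f z) y = 2 * s"
    using deriv_lin[of "2 * s" "f z" y] by simp
  have "(\<lambda>t. 2 * lam z * t - deriv lam z / (2 * lam z) * y + h z) = (\<lambda>t. (2 * lam z) * t + (h z - deriv lam z / (2 * lam z) * y))"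
    by (rule ext) simp
  then have d2: "deriv (\<lambda>t. 2 * lam z * t - deriv lam z / (2 * lam z) * y + h z) x = 2 * lam z"
    unfolding \<open>(\<lambda>t. 2 * lam z * t - deriv lam z / (2 * lam z) * y + h z) = _\<close> by (simp only: deriv_lin)
  have "(\<lambda>t. 2 * lam z * x - deriv lam z / (2 * lam z) * t + h z) = (\<lambda>t. (- (deriv lam z / (2 * lam z))) * t + (2 * lam z * x + h z))"
    by (rule ext) simp
  then have d3: "deriv (\<lambda>t. 2 * lam z * x - deriv lam z / (2 * lam z) * t + h z) y = - (deriv lam z / (2 * lam z))"
    unfolding \<open>(\<lambda>t. 2 * lam z * x - deriv lam z / (2 * lam z) * t + h z) = _\<close> by (simp only: deriv_lin)
  consider "m = 0" | "m = 1" | "m \<noteq> 0 \<and> m \<noteq> 1" by blast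
  then show ?thesis using assms True
    by cases (auto simp: p pd3_def frame_pt d1 d2[simplified] d3[simplified])
qed

lemma frame_2: "frameM s lam f h i p 2 = (if i = 2 then 1 else 0)"
  by (cases p) (auto simp: frameM_def)

definition CC :: "real \<Rightarrow> (real \<Rightarrow> real) \<Rightarrow> nat \<Rightarrow> nat \<Rightarrow> nat \<Rightarrow> real \<Rightarrow> real" where
  "CC s lam i j k z = (if i = 0 \<and> j = 2 \<and> k = 1 then 2 * lam z
     else if i = 2 \<and> j = 0 \<and> k = 1 then - 2 * lam z
     else if i = 1 \<and> j = 2 \<and> k = 0 then 2 * s
     else if i = 2 \<and> j = 1 \<and> k = 0 then - 2 * s
     else if i = 1 \<and> j = 2 \<and> k = 1 then - muf lam z
     else if i = 2 \<and> j = 1 \<and> k = 1 then muf lam z else 0)"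

lemma vderiv_frame:
  assumes "i \<noteq> j"
  shows "vderiv (frameM s lam f h i) (\<lambda>q. frameM s lam f h j q m) p =
     frameM s lam f h i p 0 * pd3 0 (\<lambda>q. frameM s lam f h j q m) p
   + frameM s lam f h i p 1 * pd3 1 (\<lambda>q. frameM s lam f h j q m) p"
  using assms by (cases "j = 2") (auto simp: vderiv_def sum3 frame_2 pd3_frame_n2)

lemma cstr_eq: "cstr (frameM s lam f h) i j k p = CC s lam i j k (snd (snd p))"
proof (cases "i = j")
  case True
  then show ?thesis by (cases p) (simp add: cstr_def lie_def fcoef_eq FC_def CC_def)
next
  case False
  obtain x y z where p: "p = (x,y,z)" by (cases p) auto
  show ?thesis using False
    by (auto simp: cstr_def lie_def fcoef_eq FC_def CC_def vderiv_frame pd3_frame p frame_pt muf_def)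
qed

definition GG :: "real \<Rightarrow> (real \<Rightarrow> real) \<Rightarrow> nat \<Rightarrow> nat \<Rightarrow> nat \<Rightarrow> real \<Rightarrow> real" where
  "GG s lam i j k = (\<lambda>z. (CC s lam i j k z - CC s lam j k i z + CC s lam k i j z) / 2)"

lemma Gam_eq: "Gam (frameM s lam f h) i j k p = GG s lam i j k (snd (snd p))"
  by (simp add: Gam_def GG_def cstr_eq)

lemma Gam_fun: "(\<lambda>q. Gam (frameM s lam f h) i j k q) = (\<lambda>q. GG s lam i j k (snd (snd q)))"
  by (simp add: Gam_eq)

lemma pd2_const: "pd2 k (\<lambda>q. c) u = 0"
  by (cases u) (simp add: pd2_def)

lemma dFc_eq: "a < 2 \<Longrightarrow> dFc (frameM s lam f h) (fc c) a u = (\<lambda>k. if k = a then 1 else 0)"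
proof -
  assume a: "a < 2"
  obtain x y where u: "u = (x,y)" by (cases u) auto
  have v: "(\<lambda>k. pd2 a (\<lambda>q. coord k (fc c q)) u) = (\<lambda>k. if k = a then 1 else 0)"
  proof
    fix k :: nat
    have "k = 0 \<or> k = 1 \<or> k \<ge> (2::nat)" by auto
    moreover have "a = 0 \<or> a = 1" using a by auto
    ultimately show "pd2 a (\<lambda>q. coord k (fc c q)) u = (if k = a then 1 else 0)"
      by (auto simp: pd2_def u coord_def fc_def)
  qed
  show ?thesis unfolding dFc_def v fcoef_eq
    by (rule ext) (cases "fc c u", use a in \<open>auto simp: FC_def\<close>)
qed

lemma dFc_fun: "a < 2 \<Longrightarrow> dFc (frameM s lam f h) (fc c) a = (\<lambda>u k. if k = a then 1 else 0)"
  using dFc_eq by blast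

lemma hm_fun: "a < 2 \<Longrightarrow> b < 2 \<Longrightarrow> hm (frameM s lam f h) (fc c) a b = (\<lambda>u. if a = b then 1 else 0)"
  by (rule ext) (auto simp: hm_def dFc_eq sum3 split: if_splits)

lemma hinv_eq: "a < 2 \<Longrightarrow> b < 2 \<Longrightarrow> hinv (frameM s lam f h) (fc c) a b u = (if a = b then 1 else 0)"
  by (auto simp: hinv_def hm_fun Let_def less_2_cases_iff)

lemma Gh_eq: "a < 2 \<Longrightarrow> b < 2 \<Longrightarrow> Gh (frameM s lam f h) (fc c) e a b u = 0"
  by (simp add: Gh_def sum2 hm_fun pd2_const)

lemma fc_z: "snd (snd (fc c u)) = c"
  by (cases u) (simp add: fc_def)

lemma tension_fun: "tension (frameM s lam f h) (fc c) = (\<lambda>u n. GG s lam 0 0 n c + GG s lam 1 1 n c)"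
  by (intro ext) (simp add: tension_def sum2 sum3 hinv_eq Gh_eq cov_def dFc_fun pd2_const Gam_eq fc_z)

lemma tau_val: "GG s lam 0 0 n c + GG s lam 1 1 n c = (if n = 2 then muf lam c else 0)"
  by (auto simp: GG_def CC_def)

lemma cov_const: "b < 2 \<Longrightarrow> cov (frameM s lam f h) (fc c) b (\<lambda>u. w) = (\<lambda>u n. \<Sum>j<3. w j * GG s lam b j n c)"
  by (intro ext) (auto simp: cov_def pd2_const dFc_eq sum3 Gam_eq fc_z less_2_cases_iff)

lemma vderiv_Gam: "vderiv (frameM s lam f h i) (\<lambda>q. Gam (frameM s lam f h) j l n q) p
   = (if i = 2 then deriv (GG s lam j l n) (snd (snd p)) else 0)"
  by (simp add: Gam_fun vderiv_def sum3 pd3_z frame_2)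

lemma GG112: "GG s lam 1 1 2 = muf lam"
  by (rule ext) (simp add: GG_def CC_def)

lemma bit2: "bitension (frameM s lam f h) (fc c) u 2 = muf lam c * (deriv (muf lam) c - 2 * (muf lam c)^2 - 4 * (lam c + s)^2)"
  apply (simp add: bitension_def rlap_def tension_fun tau_val cov_const sum2 hinv_eq Gh_eq curv_def dFc_eq sum3 Rm_def vderiv_Gam cstr_eq)
  apply (simp add: Gam_eq fc_z GG112)
  apply (simp add: GG_def CC_def)
  apply (simp add: field_simps power2_eq_square)
  done

theorem mainTheorem5:
  fixes a b c s :: real and I :: "real set" and f h lam :: "real \<Rightarrow> real"
  assumes "a \<noteq> 0"
    and "open I" and "is_interval I"
    and "\<forall>z\<in>I. 1 - a * z - b > 0"
    and "\<forall>z\<in>I. lam z = sqrt (1 - a * z - b)"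
    and "s = 1 \<or> s = -1"
    and "smooth_on I f" and "smooth_on I h"
    and "c \<in> I"
  shows "\<not> proper_biharmonic (frameM s lam f h) (fc c)
    \<and> lam c * deriv (deriv lam) c - 2 * (deriv lam c)\<^sup>2
        - 8 * (lam c)\<^sup>2 * (1 + s * lam c)\<^sup>2 \<noteq> 0"
proof -
  note a = assms(1) and op = assms(2) and pos = assms(4) and lamI = assms(5) and cI = assms(9)
  define g where "g z = 1 - a * z - b" for z
  have gpos: "z \<in> I \<Longrightarrow> g z > 0" for z using pos by (simp add: g_def)
  have gd: "(g has_real_derivative (- a)) (at z)" for z
    unfolding g_def by (auto intro!: derivative_eq_intros)
  have gd': "(g has_real_derivative (- a)) (at z within S)" for z S
    using gd by (rule has_field_derivative_at_within)
  have lam_eq: "z \<in> I \<Longrightarrow> lam z = sqrt (g z)" for z using lamI by (simp add: g_def)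
  have D1: "(lam has_real_derivative (- a / (2 * sqrt (g z)))) (at z)" if z: "z \<in> I" for z
  proof -
    have "((\<lambda>z. sqrt (g z)) has_real_derivative (- a / (2 * sqrt (g z)))) (at z)"
      using gpos[OF z]
      by (auto intro!: derivative_eq_intros gd' simp: divide_simps)
    then show ?thesis
      by (rule has_field_derivative_transform_within_open[OF _ op z]) (simp add: lam_eq)
  qed
  have dl: "z \<in> I \<Longrightarrow> deriv lam z = - a / (2 * sqrt (g z))" for z
    using D1 by (rule DERIV_imp_deriv)
  have mu_eq: "z \<in> I \<Longrightarrow> muf lam z = - a / (4 * g z)" for z
    using gpos[of z] by (simp add: muf_def dl lam_eq field_simps)
  have D2: "(muf lam has_real_derivative (- (a ^ 2) / (4 * (g c) ^ 2))) (at c)"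
  proof -
    have "((\<lambda>z. - a / (4 * g z)) has_real_derivative (- (a ^ 2) / (4 * (g c) ^ 2))) (at c)"
      using gpos[OF cI]
      by (auto intro!: derivative_eq_intros gd' simp: field_simps power2_eq_square)
    then show ?thesis
      by (rule has_field_derivative_transform_within_open[OF _ op cI]) (simp add: mu_eq)
  qed
  have D3: "(deriv lam has_real_derivative (- (a ^ 2) / (4 * g c * sqrt (g c)))) (at c)"
  proof -
    have "((\<lambda>z. - a / (2 * sqrt (g z))) has_real_derivative (- (a ^ 2) / (4 * g c * sqrt (g c)))) (at c)"
      using gpos[OF cI]
      by (auto intro!: derivative_eq_intros gd' simp: field_simps power2_eq_square)
    then show ?thesis
      by (rule has_field_derivative_transform_within_open[OF _ op cI]) (simp add: dl)
  qed
  define G where "G = g c"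
  have G: "G > 0" using gpos[OF cI] by (simp add: G_def)
  have sG: "sqrt G * sqrt G = G" using G by simp
  have sGp: "sqrt G > 0" using G by simp
  have M: "muf lam c = - a / (4 * G)" using mu_eq[OF cI] by (simp add: G_def)
  have dM: "deriv (muf lam) c = - (a ^ 2) / (4 * G ^ 2)" using DERIV_imp_deriv[OF D2] by (simp add: G_def)
  have bnz: "muf lam c * (deriv (muf lam) c - 2 * (muf lam c)^2 - 4 * (lam c + s)^2) \<noteq> 0"
  proof -
    have "deriv (muf lam) c - 2 * (muf lam c)^2 = - 3 * (a ^ 2) / (8 * G ^ 2)"
      using G by (simp add: M dM field_simps power2_eq_square)
    moreover have "- 3 * (a ^ 2) / (8 * G ^ 2) < 0" using a G by (simp add: divide_neg_pos)
    ultimately have "deriv (muf lam) c - 2 * (muf lam c)^2 - 4 * (lam c + s)^2 < 0"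
      by (smt (verit) zero_le_power2)
    moreover have "muf lam c \<noteq> 0" using a G by (simp add: M)
    ultimately show ?thesis by simp
  qed
  have nb: "\<not> biharmonic (frameM s lam f h) (fc c)"
    proof
    assume "biharmonic (frameM s lam f h) (fc c)"
    then have "bitension (frameM s lam f h) (fc c) (0, 0) 2 = 0" unfolding biharmonic_def by simp
    then show False using bnz by (simp add: bit2)
  qed
  have L: "lam c = sqrt G" by (simp add: lam_eq[OF cI] G_def)
  have dL: "deriv lam c = - a / (2 * sqrt G)" by (simp add: dl[OF cI] G_def)
  have ddL: "deriv (deriv lam) c = - (a ^ 2) / (4 * G * sqrt G)" using DERIV_imp_deriv[OF D3] by (simp add: G_def)
  have "lam c * deriv (deriv lam) c - 2 * (deriv lam c)\<^sup>2 = - 3 * (a ^ 2) / (4 * G)"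
    using G sGp sG by (simp add: L dL ddL field_simps power2_eq_square)
  moreover have "- 3 * (a ^ 2) / (4 * G) < 0" using a G by (simp add: divide_neg_pos)
  ultimately have "lam c * deriv (deriv lam) c - 2 * (deriv lam c)\<^sup>2
        - 8 * (lam c)\<^sup>2 * (1 + s * lam c)\<^sup>2 < 0"
    by (smt (verit) zero_le_power2 mult_nonneg_nonneg)
  then show ?thesis using nb by (simp add: proper_biharmonic_def)
qed

end
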